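(* Fix a constant $\Delta$. Let $\mathcal{G}$ be one of the following graph families: (i) all graphs of maximum degree at most $\Delta$; (ii) all trees of maximum degree at most $\Delta$; (iii) all cycles (in which case $\Delta=2$). Let $d(n)=n$ if $\Delta\le 2$ and $d(n)=\log n$ otherwise. Then there is no LCL problem $\Pi$ defined on $\mathcal{G}$ whose mending radius is between $\omega(1)$ and $o(d(n))$; that is, if $\Pi$ is $T$-mendable on $\mathcal{G}$ for some function $T$ with $T(n)=o(d(n))$, then $\Pi$ is $T'$-mendable on $\mathcal{G}$ for some constant function $T'$.
   Context: A locally verifiable problem $\Pi$ on a graph family $\mathcal{G}$ is given by a set $\Sigma$ of input labels, a set $\Gamma$ of output labels and a verifier $\psi$ with verification radius $r\in\mathbb{N}$: for a graph $G=(V,E)\in\mathcal{G}$ with input labeling $\sigma:V\to\Sigma$, an output labeling $\lambda:V\to\Gamma$ and a node $v$, $\psi(G,\lambda,v)\in\{\text{happy},\text{unhappy}\}$ depends only on the radius-$r$ neighborhood of $v$ (structure, inputs and outputs, up to isomorphism). $\lambda$ is a solution if $\psi$ is happy at every node. $\Pi$ is an LCL problem if $\Sigma,\Gamma$ are finite and all graphs in $\mathcal{G}$ have maximum degree bounded by a constant. Partial labelings are maps $\lambda:V\to\Gamma\cup\{\bot\}$; the relaxed verifier $\psi^*$ is happy at $v$ if some node within distance $r$ of $v$ has label $\bot$, and otherwise $\psi^*(G,\lambda,v)=\psi(G,\lambda',v)$ for any $\lambda':V\to\Gamma$ agreeing with $\lambda$ on the radius-$r$ neighborhood of $v$; $\psi^*$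 accepts $\lambda$ if it is happy at all nodes. Given $\lambda$ accepted by $\psi^*$ and a node $v$, a $t$-mend of $\lambda$ at $v$ is a partial labeling $\mu$ such that $\psi^*$ accepts $\mu$, $\mu(v)\neq\bot$, $\mu(u)=\bot$ implies $\lambda(u)=\bot$, and $\mu(u)\neq\lambda(u)$ implies $u$ is within distance $t$ of $v$. A verifier $\psi$ is $T$-mendable ($T:\mathbb{N}\to\mathbb{N}$) if for every $G\in\mathcal{G}$ with $n$ nodes, every partial labeling $\lambda$ accepted by $\psi^*$ and every node $v$, a $T(n)$-mend of $\lambda$ at $v$ exists. $\Pi$ is $T$-mendable if for some $r$ there is a radius-$r$ verifier for $\Pi$ (accepting exactly the solutions of $\Pi$) that is $T$-mendable. *)

theory Defs
  imports Main "HOL-Library.Landau_Symbols"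
begin

type_synonym graph = "nat set \<times> (nat \<Rightarrow> nat \<Rightarrow> bool)"

definition verts :: "graph \<Rightarrow> nat set" where "verts G = fst G"
definition adj :: "graph \<Rightarrow> nat \<Rightarrow> nat \<Rightarrow> bool" where "adj G = snd G"

definition wf_graph :: "graph \<Rightarrow> bool" where
  "wf_graph G \<longleftrightarrow> finite (verts G)
     \<and> (\<forall>u v. adj G u v \<longrightarrow> u \<in> verts G \<and> v \<in> verts G)
     \<and> (\<forall>u v. adj G u v \<longrightarrow> adj G v u)
     \<and> (\<forall>u. \<not> adj G u u)"

definition edge_rel :: "graph \<Rightarrow> (nat \<times> nat) set" where
  "edge_rel G = {(u, v). adj G u v}"

definition dist_le :: "graph \<Rightarrow> nat \<Rightarrow> nat \<Rightarrow> nat \<Rightarrow> bool" where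
  "dist_le G t u v \<longleftrightarrow> u \<in> verts G \<and> v \<in> verts G \<and> (\<exists>k\<le>t. (u, v) \<in> edge_rel G ^^ k)"

definition nball :: "graph \<Rightarrow> nat \<Rightarrow> nat \<Rightarrow> nat set" where
  "nball G v r = {u \<in> verts G. dist_le G r v u}"

definition degree :: "graph \<Rightarrow> nat \<Rightarrow> nat" where
  "degree G v = card {u. adj G v u}"

definition max_degree_le :: "graph \<Rightarrow> nat \<Rightarrow> bool" where
  "max_degree_le G \<Delta> \<longleftrightarrow> (\<forall>v\<in>verts G. degree G v \<le> \<Delta>)"

definition connected_graph :: "graph \<Rightarrow> bool" where
  "connected_graph G \<longleftrightarrow> (\<forall>u\<in>verts G. \<forall>v\<in>verts G. (u, v) \<in> (edge_rel G)\<^sup>*)"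

definition is_cycle_in :: "graph \<Rightarrow> nat list \<Rightarrow> bool" where
  "is_cycle_in G xs \<longleftrightarrow> length xs \<ge> 3 \<and> distinct xs \<and> set xs \<subseteq> verts G
     \<and> (\<forall>i<length xs. adj G (xs ! i) (xs ! ((i + 1) mod length xs)))"

definition is_tree :: "graph \<Rightarrow> bool" where
  "is_tree G \<longleftrightarrow> verts G \<noteq> {} \<and> connected_graph G \<and> \<not> (\<exists>xs. is_cycle_in G xs)"

definition is_cycle_graph :: "graph \<Rightarrow> bool" where
  "is_cycle_graph G \<longleftrightarrow> connected_graph G \<and> card (verts G) \<ge> 3
     \<and> (\<forall>v\<in>verts G. degree G v = 2)"

definition bdeg_graphs :: "nat \<Rightarrow> graph set" where
  "bdeg_graphs \<Delta> = {G. wf_graph G \<and> max_degree_le G \<Delta>}"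

definition bdeg_trees :: "nat \<Rightarrow> graph set" where
  "bdeg_trees \<Delta> = {G. wf_graph G \<and> max_degree_le G \<Delta> \<and> is_tree G}"

definition cycle_graphs :: "graph set" where
  "cycle_graphs = {G. wf_graph G \<and> is_cycle_graph G}"

(* A verifier: given graph, input labeling, output labeling, node, decides happiness. *)
type_synonym ('i, 'o) verifier = "graph \<Rightarrow> (nat \<Rightarrow> 'i) \<Rightarrow> (nat \<Rightarrow> 'o) \<Rightarrow> nat \<Rightarrow> bool"

(* \<psi> has verification radius r on family F: its value at v depends only on the
   radius-r neighbourhood of v (structure, inputs, outputs) up to isomorphism *)
definition local_verifier :: "graph set \<Rightarrow> ('i, 'o) verifier \<Rightarrow> nat \<Rightarrow> bool" where
  "local_verifier F \<psi> r \<longleftrightarrow>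
    (\<forall>G G' \<sigma> \<sigma>' L L' v v' f.
       G \<in> F \<and> G' \<in> F \<and> v \<in> verts G \<and> v' \<in> verts G'
       \<and> bij_betw f (nball G v r) (nball G' v' r) \<and> f v = v'
       \<and> (\<forall>x\<in>nball G v r. \<forall>y\<in>nball G v r. adj G x y \<longleftrightarrow> adj G' (f x) (f y))
       \<and> (\<forall>x\<in>nball G v r. \<sigma>' (f x) = \<sigma> x \<and> L' (f x) = L x)
       \<longrightarrow> \<psi> G \<sigma> L v = \<psi> G' \<sigma>' L' v')"

definition is_solution :: "('i, 'o) verifier \<Rightarrow> graph \<Rightarrow> (nat \<Rightarrow> 'i) \<Rightarrow> (nat \<Rightarrow> 'o) \<Rightarrow> bool" where
  "is_solution \<psi> G \<sigma> L \<longleftrightarrow> (\<forall>v\<in>verts G. \<psi> G \<sigma> L v)"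

(* Partial labelings: None plays the role of \<bottom>.  Relaxed verifier \<psi>*. *)
definition relaxed :: "('i, 'o) verifier \<Rightarrow> nat \<Rightarrow> graph \<Rightarrow> (nat \<Rightarrow> 'i) \<Rightarrow> (nat \<Rightarrow> 'o option) \<Rightarrow> nat \<Rightarrow> bool" where
  "relaxed \<psi> r G \<sigma> L v \<longleftrightarrow>
     (\<exists>u\<in>nball G v r. L u = None)
     \<or> (\<forall>L'. (\<forall>u\<in>nball G v r. L u = Some (L' u)) \<longrightarrow> \<psi> G \<sigma> L' v)"

definition relaxed_accepts :: "('i, 'o) verifier \<Rightarrow> nat \<Rightarrow> graph \<Rightarrow> (nat \<Rightarrow> 'i) \<Rightarrow> (nat \<Rightarrow> 'o option) \<Rightarrow> bool" where
  "relaxed_accepts \<psi> r G \<sigma> L \<longleftrightarrow> (\<forall>v\<in>verts G. relaxed \<psi> r G \<sigma> L v)"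

definition is_mend :: "('i, 'o) verifier \<Rightarrow> nat \<Rightarrow> graph \<Rightarrow> (nat \<Rightarrow> 'i)
     \<Rightarrow> (nat \<Rightarrow> 'o option) \<Rightarrow> nat \<Rightarrow> nat \<Rightarrow> (nat \<Rightarrow> 'o option) \<Rightarrow> bool" where
  "is_mend \<psi> r G \<sigma> L v t \<mu> \<longleftrightarrow>
     relaxed_accepts \<psi> r G \<sigma> \<mu> \<and> \<mu> v \<noteq> None
     \<and> (\<forall>u\<in>verts G. \<mu> u = None \<longrightarrow> L u = None)
     \<and> (\<forall>u\<in>verts G. \<mu> u \<noteq> L u \<longrightarrow> dist_le G t v u)"

definition verifier_mendable :: "graph set \<Rightarrow> ('i, 'o) verifier \<Rightarrow> nat \<Rightarrow> (nat \<Rightarrow> nat) \<Rightarrow> bool" where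
  "verifier_mendable F \<psi> r T \<longleftrightarrow>
     (\<forall>G\<in>F. \<forall>\<sigma> L. relaxed_accepts \<psi> r G \<sigma> L \<longrightarrow>
        (\<forall>v\<in>verts G. \<exists>\<mu>. is_mend \<psi> r G \<sigma> L v (T (card (verts G))) \<mu>))"

(* The problem \<Pi> whose solutions are those accepted by \<psi>0 (with radius r0) is T-mendable
   on F: some verifier of some radius r accepting exactly the solutions of \<Pi> is T-mendable. *)
definition problem_mendable :: "graph set \<Rightarrow> ('i, 'o) verifier \<Rightarrow> (nat \<Rightarrow> nat) \<Rightarrow> bool" where
  "problem_mendable F \<psi>0 T \<longleftrightarrow>
     (\<exists>r \<psi>. local_verifier F \<psi> r
        \<and> (\<forall>G\<in>F. \<forall>\<sigma> L. is_solution \<psi> G \<sigma> L \<longleftrightarrow> is_solution \<psi>0 G \<sigma> L)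
        \<and> verifier_mendable F \<psi> r T)"

end

theory Submission
  imports Defs
begin


lemma edge_rel_iff[simp]: "(u,v) \<in> edge_rel G \<longleftrightarrow> adj G u v"
  by (simp add: edge_rel_def)

lemma wf_adjD: "wf_graph G \<Longrightarrow> adj G u v \<Longrightarrow> u \<in> verts G \<and> v \<in> verts G"
  by (simp add: wf_graph_def)
lemma wf_sym: "wf_graph G \<Longrightarrow> adj G u v \<Longrightarrow> adj G v u"
  by (simp add: wf_graph_def)
lemma wf_irr: "wf_graph G \<Longrightarrow> \<not> adj G u u"
  by (simp add: wf_graph_def)
lemma wf_fin: "wf_graph G \<Longrightarrow> finite (verts G)"
  by (simp add: wf_graph_def)

lemma relpow_sym:
  assumes "wf_graph G" shows "(u,v) \<in> edge_rel G ^^ k \<Longrightarrow> (v,u) \<in> edge_rel G ^^ k"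
proof (induction k arbitrary: v)
  case 0 then show ?case by simp
next
  case (Suc k)
  then obtain y where "(u,y) \<in> edge_rel G ^^ k" "adj G y v" by (auto elim: relpow_Suc_E)
  then show ?case using Suc.IH assms wf_sym by (metis edge_rel_iff relpow_Suc_I2)
qed

lemma dist_le_mono: "dist_le G t u v \<Longrightarrow> t \<le> t' \<Longrightarrow> dist_le G t' u v"
  unfolding dist_le_def by (meson order_trans)

lemma dist_le_refl: "u \<in> verts G \<Longrightarrow> dist_le G t u u"
  unfolding dist_le_def by (rule conjI, simp, rule conjI, simp, rule exI[of _ 0], simp)

lemma dist_le_0: "dist_le G 0 u v \<longleftrightarrow> u \<in> verts G \<and> v = u"
  unfolding dist_le_def by auto

lemma dist_le_sym: "wf_graph G \<Longrightarrow> dist_le G t u v \<Longrightarrow> dist_le G t v u"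
  unfolding dist_le_def using relpow_sym by blast

lemma dist_le_trans: "dist_le G a u x \<Longrightarrow> dist_le G b x y \<Longrightarrow> dist_le G (a+b) u y"
  unfolding dist_le_def
proof (elim conjE exE)
  fix k l assume "u \<in> verts G" "x \<in> verts G" "k \<le> a" "(u, x) \<in> edge_rel G ^^ k"
    "y \<in> verts G" "l \<le> b" "(x, y) \<in> edge_rel G ^^ l"
  then show "u \<in> verts G \<and> y \<in> verts G \<and> (\<exists>k\<le>a + b. (u, y) \<in> edge_rel G ^^ k)"
    by (intro conjI exI[of _ "k+l"]) (auto simp: relpow_add)
qed

lemma dist_le_step: "wf_graph G \<Longrightarrow> dist_le G t u x \<Longrightarrow> adj G x y \<Longrightarrow> dist_le G (Suc t) u y"
  unfolding dist_le_def
  by (metis Suc_le_mono edge_rel_iff relpow_Suc_I wf_adjD)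

lemma dist_le_SucD: "wf_graph G \<Longrightarrow> dist_le G (Suc t) u y \<Longrightarrow> \<not> dist_le G t u y \<Longrightarrow> \<exists>x. dist_le G t u x \<and> adj G x y"
  unfolding dist_le_def
proof (elim conjE exE)
  assume wf: "wf_graph G"
  fix k assume a: "u \<in> verts G" "y \<in> verts G" "k \<le> Suc t" "(u, y) \<in> edge_rel G ^^ k"
    "\<not> (u \<in> verts G \<and> y \<in> verts G \<and> (\<exists>k\<le>t. (u, y) \<in> edge_rel G ^^ k))"
  then have "k = Suc t" by (metis le_Suc_eq)
  with a obtain x where "(u,x) \<in> edge_rel G ^^ t" "adj G x y" by (auto elim: relpow_Suc_E)
  moreover have "x \<in> verts G"
  proof (cases t)
    case 0 then show ?thesis using a calculation by simp
  next
    case (Suc s)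
    then show ?thesis using calculation wf_adjD[OF wf] by (auto elim: relpow_Suc_E)
  qed
  ultimately show "\<exists>x. (u \<in> verts G \<and> x \<in> verts G \<and> (\<exists>k\<le>t. (u, x) \<in> edge_rel G ^^ k)) \<and> adj G x y"
    using a by blast
qed

lemma nball_sub: "nball G v r \<subseteq> verts G"
  unfolding nball_def by auto

lemma nball_iff: "u \<in> nball G v r \<longleftrightarrow> dist_le G r v u"
  unfolding nball_def dist_le_def by auto

lemma relaxed_cong:
  "(\<forall>u\<in>nball G a r. L u = L' u) \<Longrightarrow> relaxed \<psi> r G \<sigma> L a = relaxed \<psi> r G \<sigma> L' a"
  unfolding relaxed_def by auto

lemma relaxed_transfer:
  assumes lv: "local_verifier F \<psi> r" and "G \<in> F" "H \<in> F" "a \<in> verts G" "a \<in> verts H"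
    and be: "nball G a r = nball H a r"
    and ad: "\<forall>x\<in>nball G a r. \<forall>y\<in>nball G a r. adj G x y = adj H x y"
    and lab: "\<forall>u\<in>nball G a r. L u = L' u"
  shows "relaxed \<psi> r G \<sigma> L a = relaxed \<psi> r H \<sigma> L' a"
proof -
  have psi: "\<psi> G \<sigma> Lt a = \<psi> H \<sigma> Lt a" for Lt
    using lv unfolding local_verifier_def
    apply (rule allE[of _ G], elim allE[of _ H] allE[of _ \<sigma>] allE[of _ \<sigma>] allE[of _ Lt] allE[of _ Lt]
      allE[of _ a] allE[of _ a] allE[of _ id])
    using assms by (auto simp: bij_betw_def)
  show ?thesis unfolding relaxed_def using be lab psi by auto
qed



definition agree :: "graph \<Rightarrow> graph \<Rightarrow> nat \<Rightarrow> nat \<Rightarrow> bool" where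
  "agree G H v R \<longleftrightarrow> nball G v R \<subseteq> verts H
    \<and> (\<forall>x\<in>nball G v R. \<forall>y\<in>nball G v R. adj G x y = adj H x y)
    \<and> (\<forall>x\<in>nball G v (R-1). \<forall>y. adj H x y \<longrightarrow> y \<in> nball G v R)"

lemma path_GH:
  assumes wf: "wf_graph G" and ag: "agree G H v R"
  shows "(a,x) \<in> edge_rel G ^^ k \<Longrightarrow> dist_le G j v a \<Longrightarrow> j + k \<le> R
     \<Longrightarrow> (a,x) \<in> edge_rel H ^^ k \<and> dist_le G (j+k) v x"
proof (induction k arbitrary: x)
  case 0 then show ?case by simp
next
  case (Suc k)
  then obtain y where y: "(a,y) \<in> edge_rel G ^^ k" "adj G y x" by (auto elim: relpow_Suc_E)
  with Suc have ih: "(a,y) \<in> edge_rel H ^^ k" "dist_le G (j+k) v y" by auto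
  have dx: "dist_le G (j + Suc k) v x" using dist_le_step[OF wf ih(2) y(2)] by simp
  have "y \<in> nball G v R" "x \<in> nball G v R"
    using ih(2) dx Suc.prems(3) dist_le_mono by (auto simp: nball_iff)
  then have "adj H y x" using ag y(2) unfolding agree_def by blast
  then show ?case using ih dx by (auto intro: relpow_Suc_I)
qed

lemma path_HG:
  assumes wf: "wf_graph G" and ag: "agree G H v R"
  shows "(a,x) \<in> edge_rel H ^^ k \<Longrightarrow> dist_le G j v a \<Longrightarrow> j + k \<le> R
     \<Longrightarrow> (a,x) \<in> edge_rel G ^^ k \<and> dist_le G (j+k) v x"
proof (induction k arbitrary: x)
  case 0 then show ?case by simp
next
  case (Suc k)
  then obtain y where y: "(a,y) \<in> edge_rel H ^^ k" "adj H y x" by (auto elim: relpow_Suc_E)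
  with Suc have ih: "(a,y) \<in> edge_rel G ^^ k" "dist_le G (j+k) v y" by auto
  have "y \<in> nball G v (R-1)" using ih(2) Suc.prems(3) dist_le_mono by (auto simp: nball_iff)
  then have xb: "x \<in> nball G v R" using ag y(2) unfolding agree_def by blast
  have yb: "y \<in> nball G v R" using ih(2) Suc.prems(3) dist_le_mono by (auto simp: nball_iff)
  have "adj G y x" using ag y(2) xb yb unfolding agree_def by blast
  then show ?case using ih dist_le_step[OF wf ih(2)] by (auto intro: relpow_Suc_I)
qed

lemma ball_eq:
  assumes wf: "wf_graph G" and ag: "agree G H v R" and d: "dist_le G j v a" and jr: "j + r \<le> R"
  shows "nball G a r = nball H a r" "a \<in> verts H"
    "nball G a r \<subseteq> nball G v R"
proof -
  have aH: "a \<in> nball G v R" using d jr dist_le_mono by (auto simp: nball_iff)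
  then show "a \<in> verts H" using ag unfolding agree_def by blast
  show sub: "nball G a r \<subseteq> nball G v R"
  proof
    fix u assume "u \<in> nball G a r"
    then have "dist_le G (j+r) v u" using dist_le_trans[OF d] by (auto simp: nball_iff)
    then show "u \<in> nball G v R" using dist_le_mono jr by (auto simp: nball_iff)
  qed
  show "nball G a r = nball H a r"
  proof
    show "nball G a r \<subseteq> nball H a r"
    proof
      fix u assume u: "u \<in> nball G a r"
      then obtain k where k: "k \<le> r" "(a,u) \<in> edge_rel G ^^ k" by (auto simp: nball_iff dist_le_def)
      then have "(a,u) \<in> edge_rel H ^^ k" using path_GH[OF wf ag k(2) d] jr by auto
      moreover have "u \<in> verts H" "a \<in> verts H" using u sub aH ag unfolding agree_def by auto
      ultimately show "u \<in> nball H a r" using k by (auto simp: nball_iff dist_le_def)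
    qed
  next
    show "nball H a r \<subseteq> nball G a r"
    proof
      fix u assume u: "u \<in> nball H a r"
      then obtain k where k: "k \<le> r" "(a,u) \<in> edge_rel H ^^ k" by (auto simp: nball_iff dist_le_def)
      then have "(a,u) \<in> edge_rel G ^^ k \<and> dist_le G (j+k) v u" using path_HG[OF wf ag k(2) d] jr by auto
      then show "u \<in> nball G a r" using k d by (auto simp: nball_iff dist_le_def)
    qed
  qed
qed

lemma transplant:
  assumes lv: "local_verifier F \<psi> r" and GF: "G \<in> F" and HF: "H \<in> F"
    and wfG: "wf_graph G" and wfH: "wf_graph H"
    and v: "v \<in> verts G" and ag: "agree G H v R" and tR: "t + 3*r \<le> R"
    and acc: "relaxed_accepts \<psi> r G \<sigma> L"
    and Hm: "\<And>LH. relaxed_accepts \<psi> r H \<sigma> LH \<Longrightarrow> \<exists>\<mu>. is_mend \<psi> r H \<sigma> LH v t \<mu>"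
  shows "\<exists>\<mu>. is_mend \<psi> r G \<sigma> L v t \<mu>"
proof -
  have dv: "dist_le G 0 v v" using v by (simp add: dist_le_0)
  have ballv: "nball G v s = nball H v s" if "s \<le> R" for s
    using ball_eq(1)[OF wfG ag dv] that by simp
  have vH: "v \<in> verts H" using ag v unfolding agree_def by (auto simp: nball_iff dist_le_refl)
  define LH where "LH u = (if u \<in> nball H v (R-r) then L u else None)" for u
  have accH: "relaxed_accepts \<psi> r H \<sigma> LH"
    unfolding relaxed_accepts_def
  proof
    fix x assume xH: "x \<in> verts H"
    show "relaxed \<psi> r H \<sigma> LH x"
    proof (cases "x \<in> nball H v (R-r)")
      case False
      then have "LH x = None" by (simp add: LH_def)
      moreover have "x \<in> nball H x r" using xH by (simp add: nball_iff dist_le_refl)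
      ultimately show ?thesis unfolding relaxed_def by blast
    next
      case True
      then have xG: "dist_le G (R-r) v x" using ballv[of "R-r"] by (auto simp: nball_iff)
      show ?thesis
      proof (cases "\<exists>u\<in>nball H x r. LH u = None")
        case True then show ?thesis unfolding relaxed_def by blast
      next
        case False
        then have eq: "\<forall>u\<in>nball H x r. LH u = L u" by (auto simp: LH_def split: if_splits)
        have be: "nball G x r = nball H x r" "x \<in> verts H" "nball G x r \<subseteq> nball G v R"
          using ball_eq[OF wfG ag xG, of r] tR by auto
        have xGv: "x \<in> verts G" using xG by (auto simp: dist_le_def)
        have adx: "\<forall>a\<in>nball G x r. \<forall>b\<in>nball G x r. adj G a b = adj H a b"
          using be(3) ag unfolding agree_def by blast
        have "relaxed \<psi> r H \<sigma> LH x = relaxed \<psi> r H \<sigma> L x"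
          using eq by (intro relaxed_cong) auto
        also have "\<dots> = relaxed \<psi> r G \<sigma> L x"
          by (rule relaxed_transfer[OF lv GF HF xGv, symmetric]) (use be adx in auto)
        finally show ?thesis using acc xGv unfolding relaxed_accepts_def by simp
      qed
    qed
  qed
  obtain \<mu>H where mH: "is_mend \<psi> r H \<sigma> LH v t \<mu>H" using Hm[OF accH] by blast
  define \<mu> where "\<mu> u = (if u \<in> nball G v (R-r) then \<mu>H u else L u)" for u
  have regH: "nball G v (R-r) = nball H v (R-r)" using ballv by simp
  have agreeL: "u \<in> nball G v (R-r) \<Longrightarrow> LH u = L u" for u using regH by (simp add: LH_def)
  have ch: "dist_le G t v u" if "u \<in> verts G" "\<mu> u \<noteq> L u" for u
  proof -
    have u: "u \<in> nball G v (R-r)" and ne: "\<mu>H u \<noteq> LH u"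
      using that agreeL by (auto simp: \<mu>_def split: if_splits)
    have "u \<in> verts H" using u regH nball_sub by blast
    then have "dist_le H t v u" using mH ne unfolding is_mend_def by blast
    then show ?thesis using ballv[of t] tR by (auto simp: nball_iff)
  qed
  have "relaxed_accepts \<psi> r G \<sigma> \<mu>"
    unfolding relaxed_accepts_def
  proof
    fix a assume aG: "a \<in> verts G"
    show "relaxed \<psi> r G \<sigma> \<mu> a"
    proof (cases "dist_le G (R - 2*r) v a")
      case True
      have be12: "nball G a r = nball H a r" "a \<in> verts H"
        using ball_eq[OF wfG ag True, of r] tR by auto
      have be3: "nball G a r \<subseteq> nball G v (R-r)"
      proof
        fix u assume "u \<in> nball G a r"
        then have "dist_le G (R - 2*r + r) v u" using dist_le_trans[OF True] by (auto simp: nball_iff)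
        moreover have "R - 2*r + r = R - r" using tR by simp
        ultimately show "u \<in> nball G v (R-r)" by (simp add: nball_iff)
      qed
      note be = be12 be3
      have sb: "nball G a r \<subseteq> nball G v R" using ball_eq(3)[OF wfG ag True, of r] tR by auto
      have adx: "\<forall>x\<in>nball G a r. \<forall>b\<in>nball G a r. adj G x b = adj H x b"
        using sb ag unfolding agree_def by blast
      have "relaxed \<psi> r G \<sigma> \<mu> a = relaxed \<psi> r G \<sigma> \<mu>H a"
        using be(3) by (intro relaxed_cong) (auto simp: \<mu>_def)
      also have "\<dots> = relaxed \<psi> r H \<sigma> \<mu>H a"
        by (rule relaxed_transfer[OF lv GF HF aG]) (use be adx in auto)
      finally show ?thesis using mH be(2) unfolding is_mend_def relaxed_accepts_def by simp
    next
      case False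
      have "\<forall>u\<in>nball G a r. \<mu> u = L u"
      proof
        fix u assume u: "u \<in> nball G a r"
        show "\<mu> u = L u"
        proof (rule ccontr)
          assume "\<mu> u \<noteq> L u"
          then have "dist_le G t v u" using ch u nball_sub by blast
          moreover have "dist_le G r u a" using u wfG dist_le_sym by (auto simp: nball_iff)
          ultimately have "dist_le G (t + r) v a" by (rule dist_le_trans)
          moreover have "t + r \<le> R - 2*r" using tR by simp
          ultimately have "dist_le G (R - 2*r) v a" by (rule dist_le_mono)
          then show False using False by simp
        qed
      qed
      then have "relaxed \<psi> r G \<sigma> \<mu> a = relaxed \<psi> r G \<sigma> L a" by (rule relaxed_cong)
      then show ?thesis using acc aG unfolding relaxed_accepts_def by simp
    qed
  qed
  moreover have "\<mu> v \<noteq> None"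
  proof -
    have "v \<in> nball G v (R-r)" using v by (simp add: nball_iff dist_le_refl)
    then show ?thesis using mH by (simp add: \<mu>_def is_mend_def)
  qed
  moreover have "\<forall>u\<in>verts G. \<mu> u = None \<longrightarrow> L u = None"
  proof (intro ballI impI)
    fix u assume "u \<in> verts G" "\<mu> u = None"
    show "L u = None"
    proof (cases "u \<in> nball G v (R-r)")
      case True
      then have "u \<in> verts H" using regH nball_sub by blast
      then have "LH u = None" using mH \<open>\<mu> u = None\<close> True unfolding is_mend_def by (auto simp: \<mu>_def)
      then show ?thesis using agreeL True by simp
    next
      case False then show ?thesis using \<open>\<mu> u = None\<close> by (simp add: \<mu>_def)
    qed
  qed
  ultimately show ?thesis using ch unfolding is_mend_def by blast
qed



definition sph :: "graph \<Rightarrow> nat \<Rightarrow> nat \<Rightarrow> nat set" where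
  "sph G v k = (if k = 0 then nball G v 0 else nball G v k - nball G v (k-1))"

lemma nball0: "v \<in> verts G \<Longrightarrow> nball G v 0 = {v}"
  by (auto simp: nball_iff dist_le_0)

lemma nbr_fin: "wf_graph G \<Longrightarrow> finite {u. adj G x u}"
proof -
  assume wf: "wf_graph G"
  have "{u. adj G x u} \<subseteq> verts G" using wf_adjD[OF wf] by blast
  then show ?thesis using wf_fin[OF wf] finite_subset by blast
qed

lemma nball_fin: "wf_graph G \<Longrightarrow> finite (nball G v k)"
  by (rule finite_subset[OF nball_sub wf_fin])

lemma sph_verts: "sph G v k \<subseteq> verts G"
  unfolding sph_def using nball_sub[of G v k] nball_sub[of G v 0] by auto

lemma sph_pred:
  assumes wf: "wf_graph G" and u: "u \<in> sph G v (Suc k)"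
  shows "\<exists>x\<in>sph G v k. adj G x u"
proof -
  have u1: "dist_le G (Suc k) v u" "\<not> dist_le G k v u" using u by (auto simp: sph_def nball_iff)
  obtain x where x: "dist_le G k v x" "adj G x u" using dist_le_SucD[OF wf u1] by blast
  have "x \<in> sph G v k"
  proof (cases k)
    case 0 then show ?thesis using x by (simp add: sph_def nball_iff)
  next
    case (Suc j)
    have "\<not> dist_le G j v x"
    proof
      assume "dist_le G j v x"
      then have "dist_le G (Suc j) v u" using dist_le_step[OF wf _ x(2)] by blast
      then show False using u1 Suc by simp
    qed
    then show ?thesis using x Suc by (simp add: sph_def nball_iff)
  qed
  then show ?thesis using x by blast
qed

lemma nball_Suc: "nball G v (Suc k) = nball G v k \<union> sph G v (Suc k)"
  using dist_le_mono[of G k v _ "Suc k"] by (auto simp: sph_def nball_iff)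

lemma sph_sub: "wf_graph G \<Longrightarrow> sph G v (Suc k) \<subseteq> (\<Union>x\<in>sph G v k. {u. adj G x u} - nball G v k)"
  using sph_pred by (fastforce simp: sph_def)

lemma sph_card_step:
  assumes wf: "wf_graph G" and md: "max_degree_le G \<Delta>" and v: "v \<in> verts G"
  shows "card (sph G v (Suc k)) \<le> card (sph G v k) * (if k = 0 then \<Delta> else \<Delta> - 1)"
proof -
  have fs: "finite (sph G v k)" using nball_fin[OF wf] by (simp add: sph_def)
  have each: "card ({u. adj G x u} - nball G v k) \<le> (if k = 0 then \<Delta> else \<Delta> - 1)"
    if x: "x \<in> sph G v k" for x
  proof -
    have xv: "x \<in> verts G" using x sph_verts by blast
    have dg: "card {u. adj G x u} \<le> \<Delta>" using md xv by (simp add: max_degree_le_def degree_def)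
    show ?thesis
    proof (cases k)
      case 0
      have "card ({u. adj G x u} - nball G v k) \<le> card {u. adj G x u}"
        by (rule card_mono[OF nbr_fin[OF wf]]) auto
      then show ?thesis using dg 0 by simp
    next
      case (Suc j)
      obtain w where w: "w \<in> sph G v j" "adj G w x" using sph_pred[OF wf] x Suc by blast
      have "w \<in> nball G v k" using w Suc dist_le_mono[of G j v w k]
        by (auto simp: sph_def nball_iff split: if_splits)
      then have "{u. adj G x u} - nball G v k \<subseteq> {u. adj G x u} - {w}" by auto
      moreover have "w \<in> {u. adj G x u}" using w wf_sym[OF wf] by blast
      ultimately have "card ({u. adj G x u} - nball G v k) \<le> card {u. adj G x u} - 1"
        using card_mono[of "{u. adj G x u} - {w}"] nbr_fin[OF wf] card_Diff_singleton
        by (metis (no_types, lifting) finite_Diff)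
      then show ?thesis using dg Suc by simp
    qed
  qed
  have "card (sph G v (Suc k)) \<le> card (\<Union>x\<in>sph G v k. {u. adj G x u} - nball G v k)"
    by (rule card_mono) (use fs nbr_fin[OF wf] sph_sub[OF wf] in auto)
  also have "\<dots> \<le> (\<Sum>x\<in>sph G v k. card ({u. adj G x u} - nball G v k))"
    by (rule card_UN_le[OF fs])
  also have "\<dots> \<le> (\<Sum>x\<in>sph G v k. (if k = 0 then \<Delta> else \<Delta> - 1))"
    by (rule sum_mono) (use each in auto)
  also have "\<dots> = card (sph G v k) * (if k = 0 then \<Delta> else \<Delta> - 1)" by simp
  finally show ?thesis .
qed

lemma sph0_card: "v \<in> verts G \<Longrightarrow> card (sph G v 0) = 1"
  by (simp add: sph_def nball0)

lemma sph_card_pow: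
  assumes wf: "wf_graph G" and md: "max_degree_le G \<Delta>" and v: "v \<in> verts G"
  shows "card (sph G v k) \<le> \<Delta> ^ k"
proof (induction k)
  case 0 then show ?case using sph0_card[OF v] by simp
next
  case (Suc k)
  have "(if k = 0 then \<Delta> else \<Delta> - 1) \<le> \<Delta>" by simp
  then have "card (sph G v k) * (if k = 0 then \<Delta> else \<Delta> - 1) \<le> card (sph G v k) * \<Delta>"
    by (rule mult_le_mono2)
  then have "card (sph G v (Suc k)) \<le> card (sph G v k) * \<Delta>"
    using sph_card_step[OF wf md v, of k] by linarith
  also have "\<dots> \<le> \<Delta>^k * \<Delta>" using Suc by simp
  finally show ?case by (simp add: mult.commute)
qed

lemma sph_card_2:
  assumes wf: "wf_graph G" and md: "max_degree_le G \<Delta>" and v: "v \<in> verts G" and D: "\<Delta> \<le> 2"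
  shows "k \<ge> 1 \<Longrightarrow> card (sph G v k) \<le> 2"
proof (induction k)
  case 0 then show ?case by simp
next
  case (Suc k)
  show ?case
  proof (cases k)
    case 0 then show ?thesis using sph_card_step[OF wf md v, of 0] sph0_card[OF v] D by simp
  next
    case (Suc j)
    then have "card (sph G v (Suc k)) \<le> card (sph G v k) * (\<Delta> - 1)"
      using sph_card_step[OF wf md v, of k] by simp
    also have "\<dots> \<le> card (sph G v k)" using D by (cases "\<Delta> - 1") auto
    also have "\<dots> \<le> 2" using Suc.IH Suc by simp
    finally show ?thesis .
  qed
qed

definition bnd :: "nat \<Rightarrow> nat \<Rightarrow> nat" where
  "bnd \<Delta> R = (if \<Delta> \<le> 2 then 2*R+1 else (\<Delta>+1)^R)"

lemma ball_card:
  assumes wf: "wf_graph G" and md: "max_degree_le G \<Delta>" and v: "v \<in> verts G"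
  shows "card (nball G v R) \<le> bnd \<Delta> R"
proof (cases "\<Delta> \<le> 2")
  case True
  have "card (nball G v R) \<le> 2*R+1"
  proof (induction R)
    case 0 then show ?case by (simp add: nball0[OF v])
  next
    case (Suc R)
    have "card (nball G v (Suc R)) \<le> card (nball G v R) + card (sph G v (Suc R))"
      unfolding nball_Suc by (rule card_Un_le)
    also have "\<dots> \<le> 2*R+1 + 2" using Suc sph_card_2[OF wf md v True, of "Suc R"] by simp
    finally show ?case by simp
  qed
  then show ?thesis using True by (simp add: bnd_def)
next
  case False
  have "card (nball G v R) \<le> (\<Delta>+1)^R"
  proof (induction R)
    case 0 then show ?case by (simp add: nball0[OF v])
  next
    case (Suc R)
    have "card (nball G v (Suc R)) \<le> card (nball G v R) + card (sph G v (Suc R))"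
      unfolding nball_Suc by (rule card_Un_le)
    also have "\<dots> \<le> (\<Delta>+1)^R + \<Delta>^(Suc R)"
      using Suc.IH sph_card_pow[OF wf md v, of "Suc R"] by linarith
    also have "\<dots> \<le> (\<Delta>+1)^R + \<Delta> * (\<Delta>+1)^R"
    proof -
      have "\<Delta>^R \<le> (\<Delta>+1)^R" by (rule power_mono) auto
      then show ?thesis by simp
    qed
    also have "\<dots> = (\<Delta>+1)^(Suc R)" by simp
    finally show ?case .
  qed
  then show ?thesis using False by (simp add: bnd_def)
qed



lemma verts_pair[simp]: "verts (A, f) = A" by (simp add: verts_def)
lemma adj_pair[simp]: "adj (A, f) = f" by (simp add: adj_def)

definition freshK :: "graph \<Rightarrow> nat" where "freshK G = Suc (Max (verts G))"

lemma freshK_gt: "wf_graph G \<Longrightarrow> x \<in> verts G \<Longrightarrow> x < freshK G"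
  unfolding freshK_def using Max_ge[OF wf_fin] by (simp add: le_imp_less_Suc)

definition Hpad :: "graph \<Rightarrow> nat set \<Rightarrow> nat \<Rightarrow> nat \<Rightarrow> graph" where
  "Hpad G Bs K m = (Bs \<union> {K..<K+m}, \<lambda>x y. x \<in> Bs \<and> y \<in> Bs \<and> adj G x y)"

lemma Hpad_props:
  assumes wf: "wf_graph G" and Bs: "Bs \<subseteq> verts G" and K: "\<forall>x\<in>verts G. x < K"
  shows "wf_graph (Hpad G Bs K m)" "card (verts (Hpad G Bs K m)) = card Bs + m"
    "max_degree_le G \<Delta> \<Longrightarrow> max_degree_le (Hpad G Bs K m) \<Delta>"
    "Bs = nball G v R \<Longrightarrow> agree G (Hpad G Bs K m) v R"
proof -
  have fB: "finite Bs" using finite_subset[OF Bs wf_fin[OF wf]] .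
  show "wf_graph (Hpad G Bs K m)" unfolding wf_graph_def Hpad_def
    using fB wf_sym[OF wf] wf_irr[OF wf] by auto
  have "Bs \<inter> {K..<K+m} = {}" using Bs K by fastforce
  then show "card (verts (Hpad G Bs K m)) = card Bs + m" unfolding Hpad_def
    using fB by (simp add: card_Un_disjoint)
  show "max_degree_le (Hpad G Bs K m) \<Delta>" if md: "max_degree_le G \<Delta>"
    unfolding max_degree_le_def degree_def
  proof
    fix x assume x: "x \<in> verts (Hpad G Bs K m)"
    show "card {u. adj (Hpad G Bs K m) x u} \<le> \<Delta>"
    proof (cases "x \<in> Bs")
      case True
      then have "card {u. adj (Hpad G Bs K m) x u} \<le> card {u. adj G x u}"
        by (intro card_mono[OF nbr_fin[OF wf]]) (auto simp: Hpad_def)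
      also have "\<dots> \<le> \<Delta>" using md True Bs by (auto simp: max_degree_le_def degree_def)
      finally show ?thesis .
    next
      case False
      then have "{u. adj (Hpad G Bs K m) x u} = {}" by (auto simp: Hpad_def)
      then show ?thesis by simp
    qed
  qed
  show "agree G (Hpad G Bs K m) v R" if "Bs = nball G v R"
    unfolding agree_def Hpad_def using that nball_sub[of G v "R-1"] dist_le_mono[of G "R-1" v _ R]
    by (auto simp: nball_iff)
qed

definition pe :: "nat \<Rightarrow> nat \<Rightarrow> bool \<Rightarrow> nat \<Rightarrow> nat \<Rightarrow> nat \<Rightarrow> nat \<Rightarrow> bool" where
  "pe z q cl K m x y \<longleftrightarrow> (x = z \<and> y = K) \<or> (K \<le> x \<and> Suc x < K + m \<and> y = Suc x)
      \<or> (cl \<and> Suc x = K + m \<and> y = q)"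

definition Hc :: "graph \<Rightarrow> nat set \<Rightarrow> nat \<Rightarrow> nat \<Rightarrow> bool \<Rightarrow> nat \<Rightarrow> nat \<Rightarrow> graph" where
  "Hc G Bs z q cl K m = (Bs \<union> {K..<K+m},
     \<lambda>x y. (x \<in> Bs \<and> y \<in> Bs \<and> adj G x y) \<or> pe z q cl K m x y \<or> pe z q cl K m y x)"

locale hc =
  fixes G :: graph and Bs :: "nat set" and z q K m :: nat and cl :: bool
  assumes wf: "wf_graph G" and Bs: "Bs \<subseteq> verts G" and K: "\<forall>x\<in>verts G. x < K"
    and z: "z \<in> Bs" and q: "q \<in> Bs" and m: "m \<ge> 1" and zq: "cl \<Longrightarrow> z \<noteq> q"
begin

abbreviation "H \<equiv> Hc G Bs z q cl K m"

lemma fB: "finite Bs" using finite_subset[OF Bs wf_fin[OF wf]] .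
lemma BsK: "x \<in> Bs \<Longrightarrow> x < K" using Bs K by blast
lemma BsK': "\<forall>x\<in>Bs. x < K" using BsK by blast
lemma zK: "z < K" using BsK z by blast
lemma qK: "q < K" using BsK q by blast

lemma vertsH: "verts H = Bs \<union> {K..<K+m}" by (simp add: Hc_def)
lemma adjH: "adj H x y \<longleftrightarrow> (x \<in> Bs \<and> y \<in> Bs \<and> adj G x y) \<or> pe z q cl K m x y \<or> pe z q cl K m y x"
  by (simp add: Hc_def)

lemma wfH: "wf_graph H"
proof -
  have f: "finite (verts H)" unfolding vertsH using fB by simp
  have iv: "x \<in> verts H \<and> y \<in> verts H" if a: "adj H x y" for x y
    using a unfolding vertsH adjH pe_def using z q m by auto
  have sy: "adj H y x" if a: "adj H x y" for x y
    using a unfolding adjH using wf_sym[OF wf] by blast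
  have ir: "\<not> adj H x x" for x
    unfolding adjH pe_def using wf_irr[OF wf] zK qK m by auto
  show ?thesis unfolding wf_graph_def using f iv sy ir by blast
qed

lemma cardH: "card (verts H) = card Bs + m"
proof -
  have "Bs \<inter> {K..<K+m} = {}" using BsK by fastforce
  then show ?thesis unfolding vertsH using fB by (simp add: card_Un_disjoint)
qed

lemma adjH_Bs: "x \<in> Bs \<Longrightarrow> y \<in> Bs \<Longrightarrow> adj H x y = adj G x y"
  unfolding adjH pe_def using BsK[of x] BsK[of y] m by auto

lemma nbrH_in: "x \<in> Bs \<Longrightarrow> x \<noteq> z \<Longrightarrow> (cl \<Longrightarrow> x \<noteq> q) \<Longrightarrow> {u. adj H x u} = {u\<in>Bs. adj G x u}"
  unfolding adjH pe_def using BsK[of x] m by auto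

lemma nbrH_z: "{u. adj H z u} = {u\<in>Bs. adj G z u} \<union> {K}"
proof (intro set_eqI iffI)
  fix u assume "u \<in> {u. adj H z u}"
  then have "(z \<in> Bs \<and> u \<in> Bs \<and> adj G z u) \<or> pe z q cl K m z u \<or> pe z q cl K m u z" by (simp add: adjH)
  then show "u \<in> {u\<in>Bs. adj G z u} \<union> {K}"
  proof (elim disjE)
    assume "pe z q cl K m z u" then show ?thesis using zK m unfolding pe_def by auto
  next
    assume "pe z q cl K m u z" then show ?thesis using zK m zq unfolding pe_def by auto
  qed simp
next
  fix u assume "u \<in> {u\<in>Bs. adj G z u} \<union> {K}"
  then show "u \<in> {u. adj H z u}" using z unfolding adjH pe_def by auto
qed

lemma nbrH_q: "cl \<Longrightarrow> {u. adj H q u} = {u\<in>Bs. adj G q u} \<union> {K+m-1}"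
proof (intro set_eqI iffI)
  assume cl
  fix u assume "u \<in> {u. adj H q u}"
  then have "(q \<in> Bs \<and> u \<in> Bs \<and> adj G q u) \<or> pe z q cl K m q u \<or> pe z q cl K m u q" by (simp add: adjH)
  then show "u \<in> {u\<in>Bs. adj G q u} \<union> {K+m-1}"
  proof (elim disjE)
    assume "pe z q cl K m q u" then show ?thesis using qK m zq \<open>cl\<close> unfolding pe_def by auto
  next
    assume "pe z q cl K m u q" then show ?thesis using qK m zq \<open>cl\<close> unfolding pe_def by auto
  qed simp
next
  assume cl
  fix u assume "u \<in> {u\<in>Bs. adj G q u} \<union> {K+m-1}"
  then show "u \<in> {u. adj H q u}" using q m \<open>cl\<close> unfolding adjH pe_def by auto
qed

lemma nbrH_path: "K \<le> x \<Longrightarrow> x < K+m \<Longrightarrow>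
   {u. adj H x u} = {if x = K then z else x - 1} \<union> (if Suc x < K+m then {Suc x} else if cl then {q} else {})"
proof (intro set_eqI iffI)
  assume x: "K \<le> x" "x < K+m"
  have xB: "x \<notin> Bs" using x BsK by fastforce
  fix u assume "u \<in> {u. adj H x u}"
  then have "pe z q cl K m x u \<or> pe z q cl K m u x" using xB by (simp add: adjH)
  then show "u \<in> {if x = K then z else x - 1} \<union> (if Suc x < K+m then {Suc x} else if cl then {q} else {})"
  proof (elim disjE)
    assume "pe z q cl K m x u" then show ?thesis using x zK qK unfolding pe_def by auto
  next
    assume "pe z q cl K m u x" then show ?thesis using x zK qK unfolding pe_def by auto
  qed
next
  assume x: "K \<le> x" "x < K+m"
  fix u assume "u \<in> {if x = K then z else x - 1} \<union> (if Suc x < K+m then {Suc x} else if cl then {q} else {})"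
  then show "u \<in> {u. adj H x u}" using x unfolding adjH pe_def by (auto split: if_splits)
qed

lemma agreeH: "Bs = nball G v R \<Longrightarrow> z \<notin> nball G v (R-1) \<Longrightarrow> (cl \<Longrightarrow> q \<notin> nball G v (R-1))
   \<Longrightarrow> agree G H v R"
  unfolding agree_def
proof (intro conjI)
  assume B: "Bs = nball G v R" and zn: "z \<notin> nball G v (R-1)" and qn: "cl \<Longrightarrow> q \<notin> nball G v (R-1)"
  show "nball G v R \<subseteq> verts H" using B vertsH by auto
  show "\<forall>x\<in>nball G v R. \<forall>y\<in>nball G v R. adj G x y = adj H x y" using B adjH_Bs by auto
  have sub: "nball G v (R-1) \<subseteq> nball G v R" using dist_le_mono[of G "R-1" v _ R] by (auto simp: nball_iff)
  show "\<forall>x\<in>nball G v (R - 1). \<forall>y. adj H x y \<longrightarrow> y \<in> nball G v R"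
  proof (intro ballI allI impI)
    fix x y assume x: "x \<in> nball G v (R-1)" and a: "adj H x y"
    have "x \<in> Bs" "x \<noteq> z" using x sub B zn by auto
    moreover have "cl \<Longrightarrow> x \<noteq> q" using x qn by auto
    ultimately have "y \<in> {u\<in>Bs. adj G x u}" using nbrH_in a by blast
    then show "y \<in> nball G v R" using B by simp
  qed
qed

lemma connH:
  assumes ag: "agree G H v R" and B: "Bs = nball G v R" and v: "v \<in> verts G"
  shows "connected_graph H"
proof -
  have symE: "sym (edge_rel H)" using wf_sym[OF wfH] by (auto simp: sym_def)
  have inB: "(v,x) \<in> (edge_rel H)\<^sup>*" if "x \<in> Bs" for x
  proof -
    have "dist_le G R v x" using that B by (simp add: nball_iff)
    then obtain k where k: "k \<le> R" "(v,x) \<in> edge_rel G ^^ k" unfolding dist_le_def by blast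
    have "(v,x) \<in> edge_rel H ^^ k" using path_GH[OF wf ag k(2), of 0] k(1) v by (simp add: dist_le_0)
    then show ?thesis by (rule relpow_imp_rtrancl)
  qed
  have inP: "(v, K + i) \<in> (edge_rel H)\<^sup>*" if "i < m" for i
    using that
  proof (induction i)
    case 0
    have "adj H z K" unfolding adjH pe_def by simp
    then show ?case using inB[OF z] by (simp add: rtrancl_into_rtrancl)
  next
    case (Suc i)
    have "adj H (K+i) (K + Suc i)" unfolding adjH pe_def using Suc.prems by simp
    then show ?case using Suc by (simp add: rtrancl_into_rtrancl)
  qed
  have all: "(v,x) \<in> (edge_rel H)\<^sup>*" if "x \<in> verts H" for x
  proof (cases "x \<in> Bs")
    case True then show ?thesis by (rule inB)
  next
    case False
    then have "K \<le> x" "x < K + m" using that vertsH by auto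
    then have "x = K + (x - K)" "x - K < m" by auto
    then show ?thesis using inP[of "x - K"] by simp
  qed
  show ?thesis unfolding connected_graph_def
  proof (intro ballI)
    fix x y assume "x \<in> verts H" "y \<in> verts H"
    then have "(v,x) \<in> (edge_rel H)\<^sup>*" "(v,y) \<in> (edge_rel H)\<^sup>*" using all by auto
    moreover have "(x,v) \<in> (edge_rel H)\<^sup>*" using calculation(1) sym_rtrancl[OF symE] by (auto simp: sym_def)
    ultimately show "(x,y) \<in> (edge_rel H)\<^sup>*" by (meson rtrancl_trans)
  qed
qed

end



lemma idx:
  fixes n i :: nat
  assumes n: "n \<ge> 3" and i: "i < n"
  shows "(i+1) mod n \<noteq> (i+n-1) mod n" "(i+1) mod n \<noteq> i" "(i+n-1) mod n \<noteq> i"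
    "((i+n-1) mod n + 1) mod n = i" "(i+1) mod n < n" "(i+n-1) mod n < n"
proof -
  have a: "(i+1) mod n = (if i + 1 = n then 0 else i + 1)" using i by auto
  have b: "(i+n-1) mod n = (if i = 0 then n - 1 else i - 1)"
  proof (cases "i = 0")
    case True then show ?thesis using n by simp
  next
    case False
    then have "i + n - 1 = (i - 1) + n" by simp
    then have "(i+n-1) mod n = (i - 1) mod n" by simp
    then show ?thesis using False i by simp
  qed
  show "(i+1) mod n \<noteq> (i+n-1) mod n" unfolding a b using n i by auto
  show "(i+1) mod n \<noteq> i" unfolding a using n i by auto
  show "(i+n-1) mod n \<noteq> i" unfolding b using n i by auto
  show "((i+n-1) mod n + 1) mod n = i" unfolding b using n i by auto
  show "(i+1) mod n < n" "(i+n-1) mod n < n" using i by auto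
qed

context hc begin

lemma acycH:
  assumes ncl: "\<not> cl" and acG: "\<not> (\<exists>xs. is_cycle_in G xs)"
  shows "\<not> (\<exists>xs. is_cycle_in H xs)"
proof
  assume "\<exists>xs. is_cycle_in H xs"
  then obtain xs where c: "is_cycle_in H xs" by blast
  define n where "n = length xs"
  have n3: "n \<ge> 3" and dis: "distinct xs" and sv: "set xs \<subseteq> verts H"
    and ad: "\<And>i. i < n \<Longrightarrow> adj H (xs ! i) (xs ! ((i + 1) mod n))"
    using c unfolding is_cycle_in_def n_def by auto
  show False
  proof (cases "set xs \<subseteq> Bs")
    case True
    have "is_cycle_in G xs" unfolding is_cycle_in_def
    proof (intro conjI allI impI)
      show "3 \<le> length xs" "distinct xs" using n3 dis n_def by auto
      show "set xs \<subseteq> verts G" using True Bs by auto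
      fix i assume i: "i < length xs"
      have "n > 0" using i n_def by linarith
      then have "(i+1) mod n < n" by simp
      then have "xs ! i \<in> Bs" "xs ! ((i+1) mod n) \<in> Bs" using True i n_def by (auto dest: nth_mem)
      then show "adj G (xs ! i) (xs ! ((i + 1) mod length xs))"
        using ad[of i] i adjH_Bs n_def by auto
    qed
    then show False using acG by blast
  next
    case False
    then obtain y where y: "y \<in> set xs" "y \<notin> Bs" by blast
    define x where "x = Max (set xs)"
    have ne: "set xs \<noteq> {}" using y by auto
    have xin: "x \<in> set xs" unfolding x_def using ne by simp
    have xge: "\<And>w. w \<in> set xs \<Longrightarrow> w \<le> x" unfolding x_def by simp
    have yK: "K \<le> y" using y sv vertsH by auto
    have xK: "K \<le> x" "x < K + m" using xge[OF y(1)] yK xin sv vertsH BsK by fastforce+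
    obtain i where i: "i < n" "xs ! i = x" using xin n_def by (auto simp: in_set_conv_nth)
    define i1 where "i1 = (i+1) mod n"
    define i0 where "i0 = (i+n-1) mod n"
    have ix: "i1 \<noteq> i0" "i1 \<noteq> i" "i0 \<noteq> i" "(i0 + 1) mod n = i" "i1 < n" "i0 < n"
      using idx[OF n3 i(1)] unfolding i1_def i0_def by auto
    have a1: "adj H x (xs ! i1)" using ad[OF i(1)] i by (simp add: i1_def)
    have a0: "adj H x (xs ! i0)" using ad[OF ix(6)] ix(4) i wf_sym[OF wfH] by auto
    have ne1: "xs ! i1 \<noteq> xs ! i0" "xs ! i1 \<noteq> x" "xs ! i0 \<noteq> x"
      using ix i dis n_def by (auto simp: nth_eq_iff_index_eq)
    have le: "xs ! i1 \<le> x" "xs ! i0 \<le> x" using xge ix(5,6) n_def by auto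
    have N: "{u. adj H x u} = {if x = K then z else x - 1} \<union> (if Suc x < K+m then {Suc x} else {})"
      using nbrH_path[OF xK] ncl by simp
    have "xs ! i1 = (if x = K then z else x - 1)" using a1 N ne1(2) le(1) by (auto split: if_splits)
    moreover have "xs ! i0 = (if x = K then z else x - 1)" using a0 N ne1(3) le(2) by (auto split: if_splits)
    ultimately show False using ne1(1) by simp
  qed
qed

end

lemma boundary:
  assumes wf: "wf_graph G" and con: "connected_graph G" and v: "v \<in> verts G"
    and nb: "\<not> verts G \<subseteq> nball G v k"
  shows "\<exists>z y. z \<in> nball G v k \<and> adj G z y \<and> y \<notin> nball G v k"
proof -
  obtain u where u: "u \<in> verts G" "u \<notin> nball G v k" using nb by blast
  have "(v,u) \<in> (edge_rel G)\<^sup>*" using con v u unfolding connected_graph_def by blast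
  then show ?thesis using u(2)
  proof (induction rule: rtrancl_induct)
    case base
    then show ?case using v by (simp add: nball_iff dist_le_refl)
  next
    case (step a b)
    show ?case
    proof (cases "a \<in> nball G v k")
      case True then show ?thesis using step by auto
    next
      case False then show ?thesis using step.IH by blast
    qed
  qed
qed

lemma boundary_sph:
  assumes wf: "wf_graph G" and z: "z \<in> nball G v k" and a: "adj G z y" and y: "y \<notin> nball G v k"
  shows "y \<in> sph G v (Suc k)" "k \<ge> 1 \<Longrightarrow> z \<notin> nball G v (k - 1)"
proof -
  have "dist_le G (Suc k) v y" using dist_le_step[OF wf _ a] z by (simp add: nball_iff)
  then show "y \<in> sph G v (Suc k)" using y by (simp add: sph_def nball_iff)
  show "z \<notin> nball G v (k - 1)" if k: "k \<ge> 1"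
  proof
    assume "z \<in> nball G v (k - 1)"
    then have "dist_le G (Suc (k-1)) v y" using dist_le_step[OF wf _ a] by (simp add: nball_iff)
    then show False using y k by (simp add: nball_iff)
  qed
qed

lemma graph_H:
  assumes G: "G \<in> bdeg_graphs \<Delta>" and M: "M \<ge> card (nball G v R)"
  shows "\<exists>H\<in>bdeg_graphs \<Delta>. card (verts H) = M \<and> agree G H v R"
proof -
  have wf: "wf_graph G" and md: "max_degree_le G \<Delta>" using G by (auto simp: bdeg_graphs_def)
  define K where "K = freshK G"
  have K: "\<forall>x\<in>verts G. x < K" using freshK_gt[OF wf] K_def by blast
  define H where "H = Hpad G (nball G v R) K (M - card (nball G v R))"
  note P = Hpad_props[OF wf nball_sub K, where m="M - card (nball G v R)"]
  have "H \<in> bdeg_graphs \<Delta>" using P(1) P(3)[OF md] by (simp add: H_def bdeg_graphs_def)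
  moreover have "card (verts H) = M" using P(2) M by (simp add: H_def)
  moreover have "agree G H v R" using P(4) by (simp add: H_def)
  ultimately show ?thesis by blast
qed

lemma tree_H:
  assumes G: "G \<in> bdeg_trees \<Delta>" and v: "v \<in> verts G" and R: "R \<ge> 1"
    and nb: "\<not> verts G \<subseteq> nball G v R" and M: "M \<ge> card (nball G v R) + 1"
  shows "\<exists>H\<in>bdeg_trees \<Delta>. card (verts H) = M \<and> agree G H v R"
proof -
  have wf: "wf_graph G" and md: "max_degree_le G \<Delta>" and tr: "is_tree G"
    using G by (auto simp: bdeg_trees_def)
  have con: "connected_graph G" and acG: "\<not> (\<exists>xs. is_cycle_in G xs)" using tr by (auto simp: is_tree_def)
  obtain z y where zy: "z \<in> nball G v R" "adj G z y" "y \<notin> nball G v R"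
    using boundary[OF wf con v nb] by blast
  have zn: "z \<notin> nball G v (R-1)" using boundary_sph(2)[OF wf zy] R by simp
  define Bs where "Bs = nball G v R"
  define K where "K = freshK G"
  define m where "m = M - card Bs"
  have K: "\<forall>x\<in>verts G. x < K" using freshK_gt[OF wf] K_def by blast
  have m: "m \<ge> 1" using M by (simp add: m_def Bs_def)
  interpret hc G Bs z z K m False
    by unfold_locales (use wf K m zy(1) nball_sub[of G v R] in \<open>auto simp: Bs_def\<close>)
  have ag: "agree G H v R" using agreeH[of v R] zn by (simp add: Bs_def)
  have conH: "connected_graph H" using connH[OF ag _ v] by (simp add: Bs_def)
  have acH: "\<not> (\<exists>xs. is_cycle_in H xs)" using acycH acG by simp
  have vB: "v \<in> Bs" using v by (simp add: Bs_def nball_iff dist_le_refl)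
  have zs: "z \<in> sph G v (Suc (R-1))" using zy(1) zn R by (simp add: sph_def)
  obtain w where w: "w \<in> sph G v (R-1)" "adj G w z" using sph_pred[OF wf zs] by blast
  have wB: "w \<in> Bs" using w(1) sph_verts[of G v "R-1"] dist_le_mono[of G "R-1" v w R]
    by (auto simp: Bs_def sph_def nball_iff split: if_splits)
  have zv: "z \<in> verts G" using zy(1) nball_sub[of G v R] by blast
  have dz: "card {u. adj G z u} \<le> \<Delta>" using md zv by (simp add: max_degree_le_def degree_def)
  have yB: "y \<notin> Bs" using zy(3) by (simp add: Bs_def)
  have "{w, y} \<subseteq> {u. adj G z u}" using w(2) zy(2) wf_sym[OF wf] by auto
  moreover have "w \<noteq> y" using wB yB by auto
  ultimately have "2 \<le> card {u. adj G z u}"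
    using card_mono[OF nbr_fin[OF wf]] by (metis card_2_iff)
  then have D2: "\<Delta> \<ge> 2" using dz by simp
  have mdH: "max_degree_le H \<Delta>" unfolding max_degree_le_def degree_def
  proof
    fix x assume xH: "x \<in> verts H"
    show "card {u. adj H x u} \<le> \<Delta>"
    proof (cases "x \<in> Bs")
      case True
      show ?thesis
      proof (cases "x = z")
        case True
        have "{u\<in>Bs. adj G z u} \<subseteq> {u. adj G z u} - {y}" using yB by auto
        then have "card {u\<in>Bs. adj G z u} \<le> card {u. adj G z u} - 1"
          using card_mono[of "{u. adj G z u} - {y}"] nbr_fin[OF wf] zy(2)
          by (metis (no_types, lifting) card_Diff_singleton finite_Diff mem_Collect_eq)
        then have "card ({u\<in>Bs. adj G z u} \<union> {K}) \<le> \<Delta>"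
          using card_Un_le[of "{u\<in>Bs. adj G z u}" "{K}"] dz D2 by simp
        then show ?thesis using nbrH_z True by simp
      next
        case False
        then have "{u. adj H x u} = {u\<in>Bs. adj G x u}" using nbrH_in \<open>x \<in> Bs\<close> by simp
        also have "card \<dots> \<le> card {u. adj G x u}" by (rule card_mono[OF nbr_fin[OF wf]]) auto
        also have "\<dots> \<le> \<Delta>" using md \<open>x \<in> Bs\<close> Bs_def nball_sub[of G v R]
          by (auto simp: max_degree_le_def degree_def)
        finally show ?thesis .
      qed
    next
      case False
      then have xK: "K \<le> x" "x < K + m" using xH vertsH by auto
      have "{u. adj H x u} \<subseteq> {if x = K then z else x - 1, Suc x}"
        using nbrH_path[OF xK] by auto
      then have "card {u. adj H x u} \<le> card {if x = K then z else x - 1, Suc x}"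
        by (rule card_mono[rotated]) simp
      also have "\<dots> \<le> 2" by (cases "(if x = K then z else x - 1) = Suc x") auto
      finally show ?thesis using D2 by simp
    qed
  qed
  have "H \<in> bdeg_trees \<Delta>" unfolding bdeg_trees_def is_tree_def
    using wfH mdH conH acH vB vertsH by auto
  moreover have "card (verts H) = M" using cardH M by (simp add: m_def Bs_def)
  ultimately show ?thesis using ag by blast
qed



lemma two_eq:
  assumes "finite S" "card S = 2" "p \<in> S" "q \<in> S" "p \<noteq> q" shows "S = {p, q}"
proof -
  have "{p,q} \<subseteq> S" using assms by auto
  moreover have "card {p,q} = card S" using assms by simp
  ultimately show ?thesis using card_subset_eq[OF assms(1)] by blast
qed

lemma sph_empty:
  assumes wf: "wf_graph G"
    and cl: "\<forall>x\<in>sph G v (Suc k). \<forall>y. adj G x y \<longrightarrow> y \<in> nball G v (Suc k)"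
  shows "sph G v (Suc (Suc k)) = {}"
proof (rule ccontr)
  assume "sph G v (Suc (Suc k)) \<noteq> {}"
  then obtain y where y: "y \<in> sph G v (Suc (Suc k))" by blast
  obtain x where x: "x \<in> sph G v (Suc k)" "adj G x y" using sph_pred[OF wf y] by blast
  have "y \<notin> nball G v (Suc k)" using y by (simp add: sph_def)
  then show False using cl x by blast
qed

lemma sph_ne:
  assumes wf: "wf_graph G" and con: "connected_graph G" and v: "v \<in> verts G"
    and nb: "\<not> verts G \<subseteq> nball G v R" and j: "j \<le> R"
  shows "sph G v (Suc j) \<noteq> {}"
proof -
  have "nball G v j \<subseteq> nball G v R" using dist_le_mono[of G j v _ R] j by (auto simp: nball_iff)
  then have "\<not> verts G \<subseteq> nball G v j" using nb by blast
  then obtain z y where "z \<in> nball G v j" "adj G z y" "y \<notin> nball G v j"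
    using boundary[OF wf con v] by blast
  then show ?thesis using boundary_sph(1)[OF wf] by blast
qed

lemma sph_Suc_eq: "sph G v (Suc k) = nball G v (Suc k) - nball G v k"
  by (simp add: sph_def)

locale cyc =
  fixes G :: graph and v :: nat
  assumes wf: "wf_graph G" and deg: "\<And>x. x \<in> verts G \<Longrightarrow> card {u. adj G x u} = 2"
    and v: "v \<in> verts G"
begin

abbreviation "N x \<equiv> {u. adj G x u}"

lemma Nfin: "finite (N x)" by (rule nbr_fin[OF wf])

lemma Neq: "x \<in> verts G \<Longrightarrow> p \<in> N x \<Longrightarrow> q \<in> N x \<Longrightarrow> p \<noteq> q \<Longrightarrow> N x = {p,q}"
  using two_eq[OF Nfin deg] by blast

lemma Nother: "x \<in> verts G \<Longrightarrow> adj G x p \<Longrightarrow> \<exists>q. q \<noteq> p \<and> N x = {p,q}"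
proof -
  assume x: "x \<in> verts G" and a: "adj G x p"
  obtain c d where cd: "N x = {c,d}" "c \<noteq> d" using deg[OF x] card_2_iff by metis
  show ?thesis
  proof (cases "p = c")
    case True then show ?thesis using cd by (intro exI[of _ d]) auto
  next
    case False
    then have "p = d" using a cd by auto
    then show ?thesis using cd by (intro exI[of _ c]) auto
  qed
qed

lemma sub_k: "nball G v k \<subseteq> nball G v (Suc k)"
  using dist_le_mono[of G k v _ "Suc k"] by (auto simp: nball_iff)

lemma adjv: "adj G x y \<Longrightarrow> x \<in> verts G \<and> y \<in> verts G" by (rule wf_adjD[OF wf])

lemma step_in: "x \<in> nball G v k \<Longrightarrow> adj G x y \<Longrightarrow> y \<in> nball G v (Suc k)"
  using dist_le_step[OF wf] by (simp add: nball_iff)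

definition Inv :: "nat \<Rightarrow> bool" where
  "Inv k \<longleftrightarrow> (\<exists>a b. a \<noteq> b \<and> sph G v k = {a,b}
      \<and> (\<exists>a'. N a \<inter> nball G v k = {a'}) \<and> (\<exists>b'. N b \<inter> nball G v k = {b'}))"

lemma nball1: "nball G v 1 = insert v (N v)"
proof -
  have "u \<in> nball G v 1 \<longleftrightarrow> u = v \<or> adj G v u" for u
  proof
    assume "u \<in> nball G v 1"
    then have "dist_le G (Suc 0) v u" by (simp add: nball_iff)
    then show "u = v \<or> adj G v u"
      using dist_le_SucD[OF wf, of 0 v u] by (auto simp: dist_le_0)
  next
    assume "u = v \<or> adj G v u"
    then show "u \<in> nball G v 1"
      using v step_in[of v 0 u] by (auto simp: nball_iff dist_le_refl)
  qed
  then show ?thesis by auto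
qed

lemma base_side:
  assumes ab: "N v = {a,b}" "a \<noteq> b" and ne2: "sph G v 2 \<noteq> {}"
  shows "N a \<inter> nball G v 1 = {v}"
proof -
  have av: "adj G a v" "adj G b v" using ab wf_sym[OF wf] by auto
  have aV: "a \<in> verts G" "b \<in> verts G" using av adjv by auto
  have nab: "\<not> adj G a b"
  proof
    assume abj: "adj G a b"
    have Na: "N a = {v,b}" using Neq[OF aV(1)] av abj ab wf_irr[OF wf] by (metis mem_Collect_eq)
    have Nb: "N b = {v,a}" using Neq[OF aV(2)] av abj wf_sym[OF wf] wf_irr[OF wf]
      by (metis mem_Collect_eq)
    have s1: "sph G v (Suc 0) = {a,b}"
      using nball1 ab wf_irr[OF wf] v by (auto simp: sph_def nball0)
    have "\<forall>x\<in>sph G v (Suc 0). \<forall>y. adj G x y \<longrightarrow> y \<in> nball G v (Suc 0)"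
      using s1 Na Nb nball1 ab by auto
    then have "sph G v (Suc (Suc 0)) = {}" by (rule sph_empty[OF wf])
    then show False using ne2 by (simp add: numeral_2_eq_2)
  qed
  show ?thesis
  proof
    show "{v} \<subseteq> N a \<inter> nball G v 1" using av nball1 by auto
    show "N a \<inter> nball G v 1 \<subseteq> {v}"
    proof
      fix w assume w: "w \<in> N a \<inter> nball G v 1"
      then have "w = v \<or> w = a \<or> w = b" using nball1 ab by auto
      then show "w \<in> {v}" using w nab wf_irr[OF wf] by auto
    qed
  qed
qed

lemma Inv1: assumes ne2: "sph G v 2 \<noteq> {}" shows "Inv 1"
proof -
  obtain a b where ab: "N v = {a,b}" "a \<noteq> b" using deg[OF v] card_2_iff by metis
  have s1: "sph G v 1 = {a,b}"
    using nball1 ab wf_irr[OF wf] v by (auto simp: sph_def nball0)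
  have "N a \<inter> nball G v 1 = {v}" using base_side[OF ab ne2] .
  moreover have "N b \<inter> nball G v 1 = {v}" using base_side[of b a] ab ne2 by (simp add: insert_commute)
  ultimately show ?thesis unfolding Inv_def using s1 ab by blast
qed

lemma step_side:
  assumes k: "k \<ge> 1"
    and sk: "sph G v k = {a,b}" and s1: "sph G v (Suc k) = {a1,b1}" and d1: "a1 \<noteq> b1"
    and Na: "N a = {a',a1}" and Nb: "N b = {b',b1}"
    and inb: "a' \<in> nball G v k" "b' \<in> nball G v k"
    and outb: "a1 \<notin> nball G v k" "b1 \<notin> nball G v k"
    and ne: "sph G v (Suc (Suc k)) \<noteq> {}"
  shows "N a1 \<inter> nball G v (Suc k) = {a}"
proof -
  have aV: "a \<in> verts G" "a1 \<in> verts G" "b1 \<in> verts G" using Na Nb adjv by auto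
  have aink: "a \<in> nball G v k" "b \<in> nball G v k" using sk by (auto simp: sph_def split: if_splits)
  have a1a: "adj G a1 a" using Na wf_sym[OF wf] by auto
  have dec: "nball G v k = nball G v (k-1) \<union> sph G v k"
    using nball_Suc[of G v "k-1"] k by simp
  have dec1: "nball G v (Suc k) = nball G v k \<union> sph G v (Suc k)" by (rule nball_Suc)
  show ?thesis
  proof
    show "{a} \<subseteq> N a1 \<inter> nball G v (Suc k)" using a1a aink sub_k by auto
    show "N a1 \<inter> nball G v (Suc k) \<subseteq> {a}"
    proof
      fix w assume w: "w \<in> N a1 \<inter> nball G v (Suc k)"
      then have aw: "adj G a1 w" by simp
      have "w \<in> nball G v (k-1) \<or> w = a \<or> w = b \<or> w = a1 \<or> w = b1"
        using w dec dec1 sk s1 by auto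
      moreover have "w \<notin> nball G v (k-1)"
      proof
        assume "w \<in> nball G v (k-1)"
        then have "a1 \<in> nball G v (Suc (k-1))" using step_in wf_sym[OF wf] aw by blast
        then show False using outb k by simp
      qed
      moreover have "w \<noteq> b"
      proof
        assume "w = b"
        then have "a1 \<in> N b" using aw wf_sym[OF wf] by auto
        then show False using Nb inb outb d1 by auto
      qed
      moreover have "w \<noteq> a1" using aw wf_irr[OF wf] by auto
      moreover have "w \<noteq> b1"
      proof
        assume wb: "w = b1"
        have ab1: "a \<noteq> b1" using aink outb by auto
        have Na1: "N a1 = {a, b1}" using Neq[OF aV(2)] a1a aw wb ab1 by auto
        have Nb1: "N b1 = {b, a1}"
        proof -
          have "adj G b1 b" using Nb wf_sym[OF wf] by auto
          moreover have "adj G b1 a1" using aw wb wf_sym[OF wf] by auto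
          moreover have "b \<noteq> a1" using aink outb by auto
          ultimately show ?thesis using Neq[OF aV(3)] by auto
        qed
        have "\<forall>x\<in>sph G v (Suc k). \<forall>y. adj G x y \<longrightarrow> y \<in> nball G v (Suc k)"
        proof (intro ballI allI impI)
          fix x y assume x: "x \<in> sph G v (Suc k)" and xy: "adj G x y"
          have inS: "a1 \<in> nball G v (Suc k)" "b1 \<in> nball G v (Suc k)"
            "a \<in> nball G v (Suc k)" "b \<in> nball G v (Suc k)"
            using s1 dec1 aink sub_k by auto
          have "x = a1 \<or> x = b1" using x s1 by auto
          then show "y \<in> nball G v (Suc k)"
          proof
            assume "x = a1" then have "y \<in> N a1" using xy by simp
            then show ?thesis using Na1 inS by auto
          next
            assume "x = b1" then have "y \<in> N b1" using xy by simp
            then show ?thesis using Nb1 inS by auto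
          qed
        qed
        then show False using sph_empty[OF wf] ne by blast
      qed
      ultimately show "w \<in> {a}" by auto
    qed
  qed
qed

lemma Inv_step:
  assumes k: "k \<ge> 1" and I: "Inv k" and ne: "sph G v (Suc (Suc k)) \<noteq> {}"
  shows "Inv (Suc k)"
proof -
  obtain a b a' b' where ab: "a \<noteq> b" "sph G v k = {a,b}"
    and a': "N a \<inter> nball G v k = {a'}" and b': "N b \<inter> nball G v k = {b'}"
    using I unfolding Inv_def by blast
  have aV: "a \<in> verts G" "b \<in> verts G" using ab(2) sph_verts[of G v k] by auto
  have aa': "adj G a a'" "a' \<in> nball G v k" using a' by auto
  have bb': "adj G b b'" "b' \<in> nball G v k" using b' by auto
  obtain a1 where a1: "a1 \<noteq> a'" "N a = {a', a1}" using Nother[OF aV(1) aa'(1)] by blast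
  obtain b1 where b1: "b1 \<noteq> b'" "N b = {b', b1}" using Nother[OF aV(2) bb'(1)] by blast
  have a1o: "a1 \<notin> nball G v k" using a' a1 by auto
  have b1o: "b1 \<notin> nball G v k" using b' b1 by auto
  have aink: "a \<in> nball G v k" "b \<in> nball G v k" using ab(2) by (auto simp: sph_def split: if_splits)
  have a1s: "a1 \<in> sph G v (Suc k)" using step_in[OF aink(1)] a1 a1o by (auto simp: sph_Suc_eq)
  have b1s: "b1 \<in> sph G v (Suc k)" using step_in[OF aink(2)] b1 b1o by (auto simp: sph_Suc_eq)
  have sub: "sph G v (Suc k) \<subseteq> {a1, b1}"
  proof
    fix y assume y: "y \<in> sph G v (Suc k)"
    obtain x where x: "x \<in> sph G v k" "adj G x y" using sph_pred[OF wf y] by blast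
    have yo: "y \<notin> nball G v k" using y by (simp add: sph_Suc_eq)
    show "y \<in> {a1, b1}"
      using x ab(2) a1 b1 yo aa'(2) bb'(2) by auto
  qed
  have s1: "sph G v (Suc k) = {a1, b1}" using sub a1s b1s by auto
  have d1: "a1 \<noteq> b1"
  proof
    assume e: "a1 = b1"
    have x1: "adj G a1 a" using a1(2) wf_sym[OF wf] by auto
    have x2: "adj G a1 b" using b1(2) e wf_sym[OF wf] by auto
    have a1V: "a1 \<in> verts G" using adjv x1 by blast
    have Na1: "N a1 = {a, b}" using Neq[OF a1V] x1 x2 ab(1) by auto
    have "\<forall>x\<in>sph G v (Suc k). \<forall>y. adj G x y \<longrightarrow> y \<in> nball G v (Suc k)"
    proof (intro ballI allI impI)
      fix x y assume x: "x \<in> sph G v (Suc k)" and xy: "adj G x y"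
      then have "x = a1" using s1 e by auto
      then have "y \<in> N a1" using xy by simp
      then show "y \<in> nball G v (Suc k)" using Na1 aink sub_k by auto
    qed
    then show False using sph_empty[OF wf] ne by blast
  qed
  have A: "N a1 \<inter> nball G v (Suc k) = {a}"
    by (rule step_side[OF k ab(2) s1 d1 a1(2) b1(2) aa'(2) bb'(2) a1o b1o ne])
  have B: "N b1 \<inter> nball G v (Suc k) = {b}"
    by (rule step_side[OF k _ _ _ b1(2) a1(2) bb'(2) aa'(2) b1o a1o ne])
      (use ab(2) s1 d1 in \<open>auto simp: insert_commute\<close>)
  show ?thesis unfolding Inv_def using d1 s1 A B by blast
qed

lemma Inv_all:
  assumes con: "connected_graph G" and nb: "\<not> verts G \<subseteq> nball G v R"
  shows "1 \<le> k \<Longrightarrow> k \<le> R \<Longrightarrow> Inv k"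
proof (induction k)
  case 0 then show ?case by simp
next
  case (Suc k)
  show ?case
  proof (cases "k = 0")
    case True
    have "sph G v (Suc 1) \<noteq> {}" using sph_ne[OF wf con v nb, of 1] Suc.prems by simp
    then show ?thesis using Inv1 True by (simp add: numeral_2_eq_2)
  next
    case False
    have "sph G v (Suc (Suc k)) \<noteq> {}" using sph_ne[OF wf con v nb, of "Suc k"] Suc.prems by simp
    then show ?thesis using Inv_step[of k] Suc False by simp
  qed
qed

end


lemma card2_pair: "(a::nat) \<noteq> b \<Longrightarrow> card {a, b} = 2" by simp

lemma cycle_H:
  assumes G: "G \<in> cycle_graphs" and v: "v \<in> verts G" and R: "R \<ge> 1"
    and nb: "\<not> verts G \<subseteq> nball G v R" and M: "M \<ge> card (nball G v R) + 1"
  shows "\<exists>H\<in>cycle_graphs. card (verts H) = M \<and> agree G H v R"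
proof -
  have wf: "wf_graph G" and con: "connected_graph G" and dg: "\<And>x. x \<in> verts G \<Longrightarrow> card {u. adj G x u} = 2"
    using G by (auto simp: cycle_graphs_def is_cycle_graph_def degree_def)
  interpret cyc G v by unfold_locales (use wf dg v in auto)
  have "Inv R" using Inv_all[OF con nb] R by simp
  then obtain p q p' q' where pq: "p \<noteq> q" "sph G v R = {p,q}"
    and p': "N p \<inter> nball G v R = {p'}" and q': "N q \<inter> nball G v R = {q'}"
    unfolding Inv_def by blast
  define Bs where "Bs = nball G v R"
  define K where "K = freshK G"
  define m where "m = M - card Bs"
  have K: "\<forall>x\<in>verts G. x < K" using freshK_gt[OF wf] K_def by blast
  have m: "m \<ge> 1" using M by (simp add: m_def Bs_def)
  have sphR: "sph G v R = nball G v R - nball G v (R-1)" using R by (simp add: sph_def)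
  have pB: "p \<in> Bs" "q \<in> Bs" "p \<notin> nball G v (R-1)" "q \<notin> nball G v (R-1)"
    using pq(2) sphR by (auto simp: Bs_def)
  interpret hc G Bs p q K m True
    by unfold_locales (use wf K m pB pq(1) nball_sub[of G v R] in \<open>auto simp: Bs_def\<close>)
  have ag: "agree G H v R" using agreeH[of v R] pB by (simp add: Bs_def)
  have conH: "connected_graph H" using connH[OF ag _ v] by (simp add: Bs_def)
  have vB: "v \<in> Bs" using v by (simp add: Bs_def nball_iff dist_le_refl)
  have v0: "v \<in> nball G v (R-1)" using v by (simp add: nball_iff dist_le_refl)
  have vpq: "v \<noteq> p" "v \<noteq> q" using v0 pB by auto
  have c3: "card (verts H) \<ge> 3"
  proof -
    have "{v,p,q} \<subseteq> verts H" using vB pB vertsH by auto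
    moreover have "card {v,p,q} = 3" using vpq pq(1) by simp
    moreover have "finite (verts H)" using wf_fin[OF wfH] .
    ultimately show ?thesis by (metis card_mono)
  qed
  have BsK: "\<And>x. x \<in> Bs \<Longrightarrow> x < K" using BsK by blast
  have p'B: "p' \<in> Bs" "q' \<in> Bs" using p' q' by (auto simp: Bs_def)
  have deg2: "card {u. adj H x u} = 2" if xH: "x \<in> verts H" for x
  proof (cases "x \<in> Bs")
    case True
    show ?thesis
    proof (cases "x = p")
      case True
      have "{u\<in>Bs. adj G p u} = {p'}" using p' by (auto simp: Bs_def)
      then have "{u. adj H x u} = {p', K}" using nbrH_z True by (simp add: insert_commute)
      moreover have "p' \<noteq> K" using BsK[OF p'B(1)] by simp
      ultimately show ?thesis by simp
    next
      case xnp: False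
      show ?thesis
      proof (cases "x = q")
        case True
        have "{u\<in>Bs. adj G q u} = {q'}" using q' by (auto simp: Bs_def)
        then have "{u. adj H x u} = {q', K+m-1}" using nbrH_q True by (simp add: insert_commute)
        moreover have "q' \<noteq> K+m-1" using BsK[OF p'B(2)] m by simp
        ultimately show ?thesis by simp
      next
        case False
        have xi: "x \<in> nball G v (R-1)" using \<open>x \<in> Bs\<close> xnp False pq(2) sphR by (auto simp: Bs_def)
        have "{u. adj H x u} = {u\<in>Bs. adj G x u}" using nbrH_in \<open>x \<in> Bs\<close> xnp False by simp
        also have "\<dots> = {u. adj G x u}"
        proof -
          have "adj G x u \<Longrightarrow> u \<in> Bs" for u
            using step_in[OF xi] R by (simp add: Bs_def)
          then show ?thesis by auto
        qed
        finally show ?thesis using dg \<open>x \<in> Bs\<close> Bs_def nball_sub[of G v R] by auto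
      qed
    qed
  next
    case False
    then have xK: "K \<le> x" "x < K + m" using xH vertsH by auto
    have e: "{u. adj H x u} = {if x = K then p else x - 1, if Suc x < K + m then Suc x else q}"
      using nbrH_path[OF xK] by auto
    have "(if x = K then p else x - 1) \<noteq> (if Suc x < K + m then Suc x else q)"
      using xK BsK[OF pB(1)] BsK[OF pB(2)] pq(1) by auto
    then show ?thesis using e by simp
  qed
  have "H \<in> cycle_graphs" unfolding cycle_graphs_def is_cycle_graph_def degree_def
    using wfH conH c3 deg2 by auto
  moreover have "card (verts H) = M" using cardH M by (simp add: m_def Bs_def)
  ultimately show ?thesis using ag by blast
qed

lemma asym:
  fixes T :: "nat \<Rightarrow> nat" and \<Delta> r :: nat
  assumes small: "(\<lambda>n. real (T n)) \<in> o(\<lambda>n. if \<Delta> \<le> 2 then real n else ln (real n))"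
  shows "\<exists>R\<ge>1. T (bnd \<Delta> R + 1) + 3 * r \<le> R"
proof -
  define d where "d = (\<lambda>n::nat. if \<Delta> \<le> 2 then real n else ln (real n))"
  define \<epsilon> where "\<epsilon> = (if \<Delta> \<le> 2 then 1/8 else 1 / (4 * ln (real \<Delta> + 1)))"
  have lnpos: "\<not> \<Delta> \<le> 2 \<Longrightarrow> ln (real \<Delta> + 1) > 0" by simp
  have ep: "\<epsilon> > 0" using lnpos by (simp add: \<epsilon>_def)
  have ev: "eventually (\<lambda>n. norm (real (T n)) \<le> \<epsilon> * norm (d n)) at_top"
    using landau_o.smallD[OF small ep] unfolding d_def by simp
  then obtain N where N: "\<And>n. n \<ge> N \<Longrightarrow> real (T n) \<le> \<epsilon> * \<bar>d n\<bar>"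
    unfolding eventually_at_top_linorder by auto
  define R where "R = N + 4 * r + 1"
  define M where "M = bnd \<Delta> R + 1"
  have R1: "R \<ge> 1" by (simp add: R_def)
  have key: "real (T M) \<le> (real R + 1) / 4"
  proof (cases "\<Delta> \<le> 2")
    case True
    have M: "M = 2 * R + 2" using True by (simp add: M_def bnd_def)
    have "M \<ge> N" using M R_def by simp
    then have "real (T M) \<le> 1/8 * real M" using N[of M] True by (simp add: \<epsilon>_def d_def)
    then show ?thesis using M by simp
  next
    case False
    have M: "M = (\<Delta>+1)^R + 1" using False by (simp add: M_def bnd_def)
    have "R < 2^R" by (rule less_exp)
    also have "(2::nat)^R \<le> (\<Delta>+1)^R" by (rule power_mono) (use False in auto)
    finally have "M \<ge> N" using M R_def by simp
    then have T1: "real (T M) \<le> \<epsilon> * \<bar>ln (real M)\<bar>" using N[of M] False by (simp add: d_def)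
    have Mpos: "real M \<ge> 1" using M by simp
    have "real M \<le> 2 * (real \<Delta> + 1) ^ R"
    proof -
      have "(1::real) \<le> (real \<Delta> + 1) ^ R" by simp
      moreover have "real M = (real \<Delta> + 1) ^ R + 1" using M by (simp add: add.commute)
      ultimately show ?thesis by linarith
    qed
    then have "ln (real M) \<le> ln (2 * (real \<Delta> + 1) ^ R)" using Mpos by simp
    also have "\<dots> = ln 2 + real R * ln (real \<Delta> + 1)" by (simp add: ln_mult ln_realpow)
    also have "\<dots> \<le> (real R + 1) * ln (real \<Delta> + 1)"
    proof -
      have "ln 2 \<le> ln (real \<Delta> + 1)" using False by simp
      then show ?thesis by (simp add: algebra_simps)
    qed
    finally have L: "ln (real M) \<le> (real R + 1) * ln (real \<Delta> + 1)" .
    have "ln (real M) \<ge> 0" using Mpos by simp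
    then have "real (T M) \<le> \<epsilon> * ((real R + 1) * ln (real \<Delta> + 1))"
      using T1 L ep by (metis abs_of_nonneg mult_left_mono order_trans less_imp_le)
    also have "\<dots> = (real R + 1) / 4" using lnpos False by (simp add: \<epsilon>_def)
    finally show ?thesis .
  qed
  have "real (T M) + 3 * real r \<le> real R" using key by (simp add: R_def)
  then have "T M + 3 * r \<le> R" by linarith
  then show ?thesis using R1 M_def by blast
qed

lemma is_mend_mono: "is_mend \<psi> r G \<sigma> L v t \<mu> \<Longrightarrow> t \<le> t' \<Longrightarrow> is_mend \<psi> r G \<sigma> L v t' \<mu>"
  unfolding is_mend_def using dist_le_mono by blast

theorem theorem8p1:
  fixes \<Delta> :: nat
    and F :: "graph set"
    and \<psi>0 :: "('i::finite, 'o::finite) verifier"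
    and r0 :: nat
    and T :: "nat \<Rightarrow> nat"
  assumes fam: "F = bdeg_graphs \<Delta> \<or> F = bdeg_trees \<Delta> \<or> (F = cycle_graphs \<and> \<Delta> = 2)"
    and lcl: "local_verifier F \<psi>0 r0"
    and mend: "problem_mendable F \<psi>0 T"
    and small: "(\<lambda>n. real (T n)) \<in> o(\<lambda>n. if \<Delta> \<le> 2 then real n else ln (real n))"
  shows "\<exists>c. problem_mendable F \<psi>0 (\<lambda>_. c)"
proof -
  obtain r and \<psi> :: "('i, 'o) verifier" where lv: "local_verifier F \<psi> r"
    and eqv: "\<forall>G\<in>F. \<forall>\<sigma> L. is_solution \<psi> G \<sigma> L \<longleftrightarrow> is_solution \<psi>0 G \<sigma> L"
    and vm: "verifier_mendable F \<psi> r T"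
    using mend unfolding problem_mendable_def by blast
  obtain R where R1: "R \<ge> 1" and TR: "T (bnd \<Delta> R + 1) + 3 * r \<le> R"
    using asym[OF small] by blast
  define c where "c = max R (Max (T ` {..bnd \<Delta> R}))"
  have Fwf: "wf_graph G \<and> max_degree_le G \<Delta>" if "G \<in> F" for G
    using fam that
    by (auto simp: bdeg_graphs_def bdeg_trees_def cycle_graphs_def is_cycle_graph_def max_degree_le_def)
  have Fex: "\<exists>H\<in>F. card (verts H) = bnd \<Delta> R + 1 \<and> agree G H v R"
    if GF: "G \<in> F" and v: "v \<in> verts G" and nb: "\<not> verts G \<subseteq> nball G v R" for G v
  proof -
    have cb: "card (nball G v R) \<le> bnd \<Delta> R" using Fwf[OF GF] ball_card v by blast
    show ?thesis
    proof (cases "F = bdeg_graphs \<Delta>")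
      case True
      then show ?thesis using graph_H[where G=G and \<Delta>=\<Delta> and M="bnd \<Delta> R + 1" and v=v and R=R] GF cb by simp
    next
      case F1: False
      show ?thesis
      proof (cases "F = bdeg_trees \<Delta>")
        case True
        then show ?thesis using tree_H[of G \<Delta> v R "bnd \<Delta> R + 1"] GF cb v R1 nb by simp
      next
        case False
        then have F2: "F = cycle_graphs" using fam F1 by simp
        then show ?thesis using cycle_H[of G v R "bnd \<Delta> R + 1"] GF cb v R1 nb by simp
      qed
    qed
  qed
  have "verifier_mendable F \<psi> r (\<lambda>_. c)"
    unfolding verifier_mendable_def
  proof (intro ballI allI impI)
    fix G \<sigma> L v
    assume GF: "G \<in> F" and acc: "relaxed_accepts \<psi> r G \<sigma> L" and v: "v \<in> verts G"
    have wfG: "wf_graph G" using Fwf[OF GF] by simp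
    show "\<exists>\<mu>. is_mend \<psi> r G \<sigma> L v c \<mu>"
    proof (cases "verts G \<subseteq> nball G v R")
      case True
      have "card (verts G) \<le> card (nball G v R)" by (rule card_mono[OF nball_fin[OF wfG] True])
      also have "\<dots> \<le> bnd \<Delta> R" using Fwf[OF GF] ball_card v by blast
      finally have "T (card (verts G)) \<le> Max (T ` {..bnd \<Delta> R})" by (intro Max_ge) auto
      then have Tc: "T (card (verts G)) \<le> c" by (simp add: c_def)
      obtain \<mu> where "is_mend \<psi> r G \<sigma> L v (T (card (verts G))) \<mu>"
        using vm GF acc v unfolding verifier_mendable_def by blast
      then show ?thesis using is_mend_mono Tc by blast
    next
      case False
      obtain H where HF: "H \<in> F" and cH: "card (verts H) = bnd \<Delta> R + 1" and ag: "agree G H v R"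
        using Fex[OF GF v False] by blast
      have wfH: "wf_graph H" using Fwf[OF HF] by simp
      have vH: "v \<in> verts H" using ag v unfolding agree_def by (auto simp: nball_iff dist_le_refl)
      have Hm: "\<exists>\<mu>. is_mend \<psi> r H \<sigma> LH v (T (bnd \<Delta> R + 1)) \<mu>"
        if "relaxed_accepts \<psi> r H \<sigma> LH" for LH
        using vm HF that vH cH unfolding verifier_mendable_def by metis
      obtain \<mu> where "is_mend \<psi> r G \<sigma> L v (T (bnd \<Delta> R + 1)) \<mu>"
        using transplant[OF lv GF HF wfG wfH v ag TR acc Hm] by blast
      moreover have "T (bnd \<Delta> R + 1) \<le> c" using TR by (simp add: c_def)
      ultimately show ?thesis using is_mend_mono by blast
    qed
  qed
  then show ?thesis using lv eqv unfolding problem_mendable_def by blast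
qed


end
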